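(* Consider any Monteiro–Svaiter iteration (as defined in the context; in particular $x_0=v_0$). Then for all $k\ge0$, $$\|x_k-x^*\|_{\mathbf{M}}\le\frac{2-\sigma}{1-\sigma}\sqrt{2p_0}\quad\text{and}\quad\|v_k-x^*\|_{\mathbf{M}}\le\sqrt{2p_0}.$$
   Context: Let $\mathbf{M}\in\mathbb{R}^{d\times d}$ be symmetric positive semidefinite with Moore–Penrose pseudoinverse $\mathbf{M}^\dagger$; write $\|x\|_{\mathbf{M}}=\sqrt{x^\top\mathbf{M}x}$ and $\|x\|_{\mathbf{M}^\dagger}=\sqrt{x^\top\mathbf{M}^\dagger x}$. Let $f:\mathbb{R}^d\to\mathbb{R}$ be strictly convex and differentiable with $\nabla f(x)\in\operatorname{Im}(\mathbf{M})$ for all $x$, with a minimizer $x^*$, and fix $\sigma\in[0,1)$. A Monteiro–Svaiter iteration consists of $A_0\ge0$, $x_0=v_0\in\mathbb{R}^d$, and for each $k\ge0$ a number $\lambda_{k+1}>0$ and points $y_k,x_{k+1}\in\mathbb{R}^d$ such that, with $a_{k+1}=\frac{\lambda_{k+1}+\sqrt{\lambda_{k+1}^2+4\lambda_{k+1}A_k}}{2}$, one has $y_k=\frac{A_k}{A_k+a_{k+1}}x_k+\frac{a_{k+1}}{A_k+a_{k+1}}v_k$ and $\|x_{k+1}-(y_k-\lambda_{k+1}\mathbf{M}^\dagger\nabla f(x_{k+1}))\|_{\mathbf{M}}\le\sigma\|x_{k+1}-y_k\|_{\mathbf{M}}$; then $v_{k+1}=v_k-a_{k+1}\mathbf{M}^\dagger\nabla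 f(x_{k+1})$ and $A_{k+1}=A_k+a_{k+1}$. The potential is $p_k=A_k(f(x_k)-f(x^* ))+\frac12\|v_k-x^*\|_{\mathbf{M}}^2$. *)

theory Defs
  imports "HOL-Analysis.Analysis"
begin

definition mp_pinv :: "real^'n^'n \<Rightarrow> real^'n^'n" where
  "mp_pinv A = (THE X. A ** X ** A = A \<and> X ** A ** X = X \<and>
                      transpose (A ** X) = A ** X \<and> transpose (X ** A) = X ** A)"

definition psd :: "real^'n^'n \<Rightarrow> bool" where
  "psd M \<longleftrightarrow> transpose M = M \<and> (\<forall>x. 0 \<le> x \<bullet> (M *v x))"

definition mnorm :: "real^'n^'n \<Rightarrow> real^'n \<Rightarrow> real" where
  "mnorm M x = sqrt (x \<bullet> (M *v x))"

definition strictly_convex :: "(real^'n \<Rightarrow> real) \<Rightarrow> bool" where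
  "strictly_convex f \<longleftrightarrow> (\<forall>x y t. x \<noteq> y \<longrightarrow> 0 < t \<longrightarrow> t < 1 \<longrightarrow>
      f ((1 - t) *\<^sub>R x + t *\<^sub>R y) < (1 - t) * f x + t * f y)"

end

theory Submission
  imports Defs
begin



definition penrose :: "real^'n^'n \<Rightarrow> real^'n^'n \<Rightarrow> bool" where
  "penrose A X \<longleftrightarrow> A ** X ** A = A \<and> X ** A ** X = X \<and>
                      transpose (A ** X) = A ** X \<and> transpose (X ** A) = X ** A"

lemma penrose_unique:
  assumes X: "penrose A X" and Y: "penrose A Y" shows "X = Y"
proof -
  have x1: "A ** X ** A = A" and x2: "X ** A ** X = X" and x3: "transpose (A ** X) = A ** X"
    and x4: "transpose (X ** A) = X ** A" using X by (auto simp: penrose_def)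
  have y1: "A ** Y ** A = A" and y2: "Y ** A ** Y = Y" and y3: "transpose (A ** Y) = A ** Y"
    and y4: "transpose (Y ** A) = Y ** A" using Y by (auto simp: penrose_def)
  have "X = X ** (A ** X)" using x2 by (simp add: matrix_mul_assoc)
  also have "\<dots> = X ** transpose (A ** X)" using x3 by simp
  also have "\<dots> = X ** (transpose X ** transpose A)" by (simp add: matrix_transpose_mul)
  also have "\<dots> = X ** (transpose X ** transpose (A ** Y ** A))" using y1 by simp
  also have "\<dots> = X ** (transpose X ** transpose A) ** (transpose Y ** transpose A)"
    by (simp add: matrix_transpose_mul matrix_mul_assoc)
  also have "\<dots> = X ** transpose (A ** X) ** transpose (A ** Y)"
    by (simp add: matrix_transpose_mul)
  also have "\<dots> = X ** A ** Y" using x3 y3 x2 by (simp add: matrix_mul_assoc)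
  finally have ex: "X = X ** A ** Y" .
  have "Y = (Y ** A) ** Y" using y2 by simp
  also have "\<dots> = transpose (Y ** A) ** Y" using y4 by simp
  also have "\<dots> = transpose A ** transpose Y ** Y" by (simp add: matrix_transpose_mul)
  also have "\<dots> = transpose (A ** X ** A) ** transpose Y ** Y" using x1 by simp
  also have "\<dots> = (transpose A ** transpose X) ** (transpose A ** transpose Y) ** Y"
    by (simp add: matrix_transpose_mul matrix_mul_assoc)
  also have "\<dots> = transpose (X ** A) ** transpose (Y ** A) ** Y"
    by (simp add: matrix_transpose_mul)
  also have "\<dots> = X ** A ** (Y ** A ** Y)" using x4 y4 by (simp add: matrix_mul_assoc)
  also have "\<dots> = X ** A ** Y" using y2 by simp
  finally show ?thesis using ex by simp
qed




lemma sym_dot: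
  fixes M :: "real^'n^'n"
  assumes "transpose M = M"
  shows "(M *v u) \<bullet> x = u \<bullet> (M *v x)"
proof -
  have "M *v u = u v* transpose M" by simp
  then have "M *v u = u v* M" using assms by simp
  then show ?thesis by (simp add: dot_lmul_matrix)
qed

lemma penrose_exists:
  fixes M :: "real^'n^'n"
  assumes symM: "transpose M = M"
  shows "\<exists>X. penrose M X"
proof -
  define V where "V = range (\<lambda>u. M *v u)"
  have subV: "subspace V" unfolding V_def
    using linear_subspace_image[OF matrix_vector_mul_linear subspace_UNIV] by (simp add: image_def)
  obtain T where TV: "T \<subseteq> V" and Torth: "pairwise orthogonal T"
    and Tn: "\<And>x. x \<in> T \<Longrightarrow> norm x = 1" and Tind: "independent T" and Tspan: "span T = V"
    using orthonormal_basis_subspace[OF subV] by metis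
  have finT: "finite T" using Tind independent_imp_finite by blast
  have Tbb: "\<And>b. b \<in> T \<Longrightarrow> b \<bullet> b = 1" using Tn by (simp add: norm_eq_1)
  define P :: "real^'n^'n" where "P = (\<chi> i j. \<Sum>b\<in>T. b$i * b$j)"
  have Pv: "P *v x = (\<Sum>b\<in>T. (b \<bullet> x) *\<^sub>R b)" for x
    unfolding P_def
    by (simp add: vec_eq_iff matrix_vector_mult_def inner_vec_def sum_component
        sum_distrib_left sum_distrib_right sum.swap[of _ T] algebra_simps)
  have PV: "P *v x \<in> V" for x
    unfolding Pv Tspan[symmetric]
    by (intro span_sum span_mul span_base) 
  have Porth: "orthogonal w (x - P *v x)" if "w \<in> V" for w x
  proof -
    have "(\<Sum>b\<in>T. (b \<bullet> x / (b \<bullet> b)) *\<^sub>R b) = P *v x"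
      unfolding Pv by (intro sum.cong) (auto simp: Tbb)
    with Gram_Schmidt_step[OF Torth, of w x] that Tspan show ?thesis by simp
  qed
  have P1: "P *v v = v" if "v \<in> V" for v
  proof -
    have "v - P *v v \<in> V" using that PV subV by (simp add: subspace_diff)
    then have "orthogonal (v - P *v v) (v - P *v v)" using Porth[OF _, of "v - P *v v" v] by simp
    then show ?thesis by (simp add: orthogonal_def)
  qed
  have P2: "P *v x = 0" if "M *v x = 0" for x
  proof -
    obtain u where u: "P *v x = M *v u" using PV[of x] unfolding V_def by auto
    have "(P *v x) \<bullet> (x - P *v x) = 0" using Porth[OF PV, of x x] by (simp add: orthogonal_def)
    then have "(P *v x) \<bullet> (P *v x) = (P *v x) \<bullet> x" by (simp add: inner_diff_right)
    also have "\<dots> = u \<bullet> (M *v x)" using u sym_dot[OF symM] by simp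
    also have "\<dots> = 0" using that by simp
    finally show ?thesis by simp
  qed
  have PM: "P *v (M *v x) = M *v x" for x using P1 V_def by auto
  have PP: "P *v (P *v x) = P *v x" for x using P1 PV by auto
  have symP: "transpose P = P" unfolding P_def by (simp add: vec_eq_iff transpose_def mult.commute)
  have PMm: "P ** M = M" using PM by (simp add: matrix_eq matrix_vector_mul_assoc[symmetric])
  have MPm: "M ** P = M"
  proof -
    have "transpose (P ** M) = transpose M" using PMm by simp
    then show ?thesis by (simp add: matrix_transpose_mul symP symM)
  qed
  have MP: "M *v (P *v x) = M *v x" for x using MPm by (metis matrix_vector_mul_assoc)
  define N where "N = M + (mat 1 - P)"
  have Nv: "N *v x = M *v x + x - P *v x" for x unfolding N_def by (simp add: algebra_simps)
  have Ninj: "\<forall>x. N *v x = 0 \<longrightarrow> x = 0"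
  proof (intro allI impI)
    fix x assume "N *v x = 0"
    then have e: "M *v x + x - P *v x = 0" using Nv by simp
    have "P *v (M *v x + x - P *v x) = M *v x" by (simp add: algebra_simps PM PP)
    then have Mx: "M *v x = 0" using e by simp
    then have "x = P *v x" using e by simp
    then show "x = 0" using P2[OF Mx] by simp
  qed
  obtain Ni where Ni: "Ni ** N = mat 1" using Ninj matrix_left_invertible_ker by blast
  then have Ni2: "N ** Ni = mat 1" using matrix_left_right_inverse by blast
  have NiN: "Ni *v (N *v x) = x" for x using Ni by (metis matrix_vector_mul_assoc matrix_vector_mul_lid)
  have NNi: "N *v (Ni *v x) = x" for x using Ni2 by (metis matrix_vector_mul_assoc matrix_vector_mul_lid)
  define X where "X = Ni - (mat 1 - P)"
  have Xv: "X *v z = Ni *v z - z + P *v z" for z unfolding X_def by (simp add: algebra_simps)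
  have MNi: "M *v (Ni *v z) = P *v z" for z
  proof -
    define w where "w = Ni *v z"
    have "z = M *v w + w - P *v w" using NNi[of z] Nv w_def by simp
    then have "P *v z = P *v (M *v w + w - P *v w)" by simp
    also have "\<dots> = M *v w" by (simp add: algebra_simps PM PP)
    finally have "P *v z = M *v w" .
    then show ?thesis using w_def by simp
  qed
  have MX: "M ** X = P"
    by (simp add: matrix_eq matrix_vector_mul_assoc[symmetric] Xv algebra_simps MNi MP)
  have NP: "N *v (P *v z) = M *v z" for z by (simp add: Nv MP PP)
  have XM: "X ** M = P"
  proof -
    have "Ni *v (M *v z) = P *v z" for z using NiN[of "P *v z"] NP by simp
    then show ?thesis
      by (simp add: matrix_eq matrix_vector_mul_assoc[symmetric] Xv algebra_simps PM)
  qed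
  have PX: "P *v (X *v z) = X *v z" for z
  proof -
    define w where "w = Ni *v z"
    have z: "z = M *v w + w - P *v w" using NNi[of z] Nv w_def by simp
    have "P *v z = P *v (M *v w + w - P *v w)" using z by simp
    also have "\<dots> = M *v w" by (simp add: algebra_simps PM PP)
    finally have "P *v z = M *v w" .
    then have "X *v z = w - z + M *v w" using Xv[of z] unfolding w_def[symmetric] by simp
    also have "\<dots> = P *v w" by (subst z) (simp add: algebra_simps)
    finally have "X *v z = P *v w" .
    then show ?thesis using PP by simp
  qed
  have "penrose M X"
    unfolding penrose_def
  proof (intro conjI)
    show "M ** X ** M = M" using MX PMm by simp
    show "X ** M ** X = X" using XM PX by (simp add: matrix_eq matrix_vector_mul_assoc[symmetric])
    show "transpose (M ** X) = M ** X" using MX symP by simp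
    show "transpose (X ** M) = X ** M" using XM symP by simp
  qed
  then show ?thesis by blast
qed

lemma mp_pinv_MPM:
  fixes M :: "real^'n^'n"
  assumes "transpose M = M"
  shows "M ** mp_pinv M ** M = M"
proof -
  obtain X where X: "penrose M X" using penrose_exists[OF assms] by blast
  have "mp_pinv M = X" unfolding mp_pinv_def
    by (rule the_equality) (use X penrose_unique in \<open>auto simp: penrose_def\<close>)
  then show ?thesis using X by (simp add: penrose_def)
qed




lemma sconv_le:
  assumes "strictly_convex f" "0 < t" "t < 1"
  shows "f ((1 - t) *\<^sub>R p + t *\<^sub>R q) \<le> (1 - t) * f p + t * f q"
proof (cases "p = q")
  case True
  then have "(1 - t) *\<^sub>R p + t *\<^sub>R q = p" by (simp add: algebra_simps)
  then show ?thesis using True by (simp add: algebra_simps)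
next
  case False
  then show ?thesis using assms unfolding strictly_convex_def by (simp add: less_imp_le)
qed

lemma grad_ineq:
  fixes f :: "real^'n \<Rightarrow> real"
  assumes sc: "strictly_convex f"
    and fd: "(f has_derivative (\<lambda>h. G \<bullet> h)) (at x)"
  shows "G \<bullet> (z - x) \<le> f z - f x"
proof -
  define d where "d = z - x"
  define \<phi> where "\<phi> t = f (x + t *\<^sub>R d)" for t
  have cv: "convex_on UNIV \<phi>"
  proof (rule convex_onI)
    fix t a b :: real assume t: "0 < t" "t < 1"
    have "x + ((1 - t) *\<^sub>R a + t *\<^sub>R b) *\<^sub>R d = (1 - t) *\<^sub>R (x + a *\<^sub>R d) + t *\<^sub>R (x + b *\<^sub>R d)"
      by (simp add: algebra_simps)
    then show "\<phi> ((1 - t) *\<^sub>R a + t *\<^sub>R b) \<le> (1 - t) * \<phi> a + t * \<phi> b"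
      unfolding \<phi>_def using sconv_le[OF sc t] by simp
  qed simp
  have "((\<lambda>t. x + t *\<^sub>R d) has_derivative (\<lambda>h. h *\<^sub>R d)) (at 0)"
    by (auto intro!: derivative_eq_intros)
  moreover have "(f has_derivative (\<lambda>h. G \<bullet> h)) (at (x + 0 *\<^sub>R d))" using fd by simp
  ultimately have "((\<lambda>t. f (x + t *\<^sub>R d)) has_derivative (\<lambda>h. G \<bullet> (h *\<^sub>R d))) (at 0)"
    using has_derivative_compose[of "\<lambda>t. x + t *\<^sub>R d"] by (metis (no_types) has_derivative_in_compose)
  then have "(\<phi> has_derivative (\<lambda>h. (G \<bullet> d) * h)) (at 0)"
    unfolding \<phi>_def by (simp add: mult.commute)
  then have "(\<phi> has_field_derivative (G \<bullet> d)) (at 0 within UNIV)"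
    by (simp add: has_field_derivative_def)
  from convex_on_imp_above_tangent[OF cv connected_UNIV _ _ this, of 1]
  have "\<phi> 1 - \<phi> 0 \<ge> (G \<bullet> d) * (1 - 0)" by simp
  then show ?thesis unfolding \<phi>_def d_def by simp
qed




definition ipM :: "real^'n^'n \<Rightarrow> real^'n \<Rightarrow> real^'n \<Rightarrow> real" where
  "ipM M u w = u \<bullet> (M *v w)"

lemma ipM_sym: assumes "psd M" shows "ipM M u w = ipM M w u"
proof -
  have "transpose M *v w = w v* M" by simp
  then have "M *v w = w v* M" using assms unfolding psd_def by metis
  then show ?thesis unfolding ipM_def by (metis dot_lmul_matrix inner_commute)
qed

lemma ipM_simps:
  "ipM M (u + v) w = ipM M u w + ipM M v w"
  "ipM M (u - v) w = ipM M u w - ipM M v w"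
  "ipM M u (v + w) = ipM M u v + ipM M u w"
  "ipM M u (v - w) = ipM M u v - ipM M u w"
  "ipM M (c *\<^sub>R u) w = c * ipM M u w"
  "ipM M u (c *\<^sub>R w) = c * ipM M u w"
  unfolding ipM_def by (simp_all add: algebra_simps inner_add_left inner_diff_left)

lemma ipM_nonneg: "psd M \<Longrightarrow> 0 \<le> ipM M u u"
  unfolding ipM_def psd_def by simp

lemma mnorm_sq: "psd M \<Longrightarrow> (mnorm M u)\<^sup>2 = ipM M u u"
  unfolding mnorm_def using ipM_nonneg[of M u] by (simp add: ipM_def)

lemma mnorm_nonneg: "psd M \<Longrightarrow> 0 \<le> mnorm M u" unfolding mnorm_def psd_def
  by simp

lemma ipM_CS:
  assumes psd: "psd M"
  shows "(ipM M u w)\<^sup>2 \<le> ipM M u u * ipM M w w"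
proof -
  have q: "0 \<le> ipM M u u - 2 * t * ipM M u w + t\<^sup>2 * ipM M w w" for t
  proof -
    have "0 \<le> ipM M (u - t *\<^sub>R w) (u - t *\<^sub>R w)" by (rule ipM_nonneg[OF psd])
    also have "\<dots> = ipM M u u - 2 * t * ipM M u w + t\<^sup>2 * ipM M w w"
      using ipM_sym[OF psd, of w u] by (simp add: ipM_simps power2_eq_square algebra_simps)
    finally show ?thesis .
  qed
  show ?thesis
  proof (cases "ipM M w w = 0")
    case True
    show ?thesis
    proof (cases "ipM M u w = 0")
      case False
      have "0 \<le> ipM M u u - 2 * ((ipM M u u + 1) / (2 * ipM M u w)) * ipM M u w"
        using q[of "(ipM M u u + 1) / (2 * ipM M u w)"] True by simp
      also have "\<dots> = -1" using False by (simp add: field_simps)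
      finally show ?thesis by simp
    qed (use True ipM_nonneg[OF psd] in simp)
  next
    case False
    then have pos: "0 < ipM M w w" using ipM_nonneg[OF psd, of w] by simp
    define t where "t = ipM M u w / ipM M w w"
    have "0 \<le> ipM M u u - 2 * t * ipM M u w + t\<^sup>2 * ipM M w w" by (rule q)
    also have "\<dots> = ipM M u u - (ipM M u w)\<^sup>2 / ipM M w w"
      unfolding t_def using pos by (simp add: field_simps power2_eq_square)
    finally have "(ipM M u w)\<^sup>2 / ipM M w w \<le> ipM M u u" by simp
    then show ?thesis using pos by (simp add: field_simps)
  qed
qed

lemma mnorm_tri:
  assumes psd: "psd M"
  shows "mnorm M (u + w) \<le> mnorm M u + mnorm M w"
proof -
  have "ipM M u w \<le> mnorm M u * mnorm M w"
  proof -
    have "ipM M u w \<le> \<bar>ipM M u w\<bar>" by simp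
    also have "\<dots> = sqrt ((ipM M u w)\<^sup>2)" by simp
    also have "\<dots> \<le> sqrt (ipM M u u * ipM M w w)" using ipM_CS[OF psd] real_sqrt_le_mono by blast
    also have "\<dots> = mnorm M u * mnorm M w" unfolding mnorm_def ipM_def by (simp add: real_sqrt_mult)
    finally show ?thesis .
  qed
  then have "(mnorm M (u + w))\<^sup>2 \<le> (mnorm M u + mnorm M w)\<^sup>2"
    using ipM_sym[OF psd, of w u]
    by (simp add: mnorm_sq[OF psd] power2_sum ipM_simps)
  then show ?thesis using mnorm_nonneg[OF psd, of u] mnorm_nonneg[OF psd, of w]
    by (meson add_nonneg_nonneg power2_le_imp_le)
qed

lemma mnorm_scale: "mnorm M (c *\<^sub>R u) = \<bar>c\<bar> * mnorm M u"
proof -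
  have "(c *\<^sub>R u) \<bullet> (M *v (c *\<^sub>R u)) = c\<^sup>2 * (u \<bullet> (M *v u))"
    by (simp add: algebra_simps power2_eq_square)
  then show ?thesis unfolding mnorm_def by (simp add: real_sqrt_mult)
qed



lemma sig_aux:
  fixes s K w :: real
  assumes "0 \<le> s" "s < 1" "0 \<le> K" "(1 - s\<^sup>2) * w \<le> K"
  shows "s\<^sup>2 * w \<le> K / (1 - s)\<^sup>2"
proof -
  have "s * s \<le> s * 1" using assms by (intro mult_left_mono) auto
  then have p: "0 < 1 - s\<^sup>2" using assms by (simp add: power2_eq_square)
  have w: "w \<le> K / (1 - s\<^sup>2)" using assms p by (simp add: field_simps mult.commute)
  have "s\<^sup>2 * w \<le> s\<^sup>2 * (K / (1 - s\<^sup>2))" using w by (intro mult_left_mono) auto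
  also have "\<dots> \<le> K / (1 - s)\<^sup>2"
  proof -
    have "s\<^sup>2 * (1 - s)\<^sup>2 \<le> 1 - s\<^sup>2"
    proof -
      have "s\<^sup>2 * (1 - s)\<^sup>2 = (1 - s) * (s\<^sup>2 * (1 - s))" by (simp add: power2_eq_square)
      also have "\<dots> \<le> (1 - s) * (1 + s)"
      proof (intro mult_left_mono)
        have "s\<^sup>2 * (1 - s) \<le> s\<^sup>2 * 1" using assms by (intro mult_left_mono) auto
        moreover have "s\<^sup>2 \<le> 1" using assms by (simp add: power_le_one)
        ultimately show "s\<^sup>2 * (1 - s) \<le> 1 + s" using assms by linarith
      qed (use assms in auto)
      also have "\<dots> = 1 - s\<^sup>2" by (simp add: power2_eq_square algebra_simps)
      finally show ?thesis .
    qed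
    then have "s\<^sup>2 * K * (1 - s)\<^sup>2 \<le> K * (1 - s\<^sup>2)" using assms
      by (metis mult.assoc mult.commute mult_left_mono)
    then show ?thesis using p assms by (simp add: field_simps)
  qed
  finally show ?thesis .
qed




lemma ipM_expand:
  assumes psd: "psd M"
  shows "ipM M (d - c *\<^sub>R e) (d - c *\<^sub>R e) = ipM M d d - 2 * c * ipM M e d + c\<^sup>2 * ipM M e e"
  using ipM_sym[OF psd, of d e] by (simp add: ipM_simps power2_eq_square algebra_simps)

lemma ipM_neg: "ipM M (- z) (- z) = ipM M z z"
proof -
  have "M *v (- z) = - (M *v z)" using matrix_vector_mult_diff_distrib[of M 0 z] by simp
  then show ?thesis unfolding ipM_def by simp
qed

lemma mnorm_neg: "mnorm M (- z) = mnorm M z"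
  using ipM_neg[of M z] unfolding mnorm_def ipM_def by simp

lemma half_pos: "0 \<le> (s::real) \<Longrightarrow> 0 < l \<Longrightarrow> 0 < (l + s) / 2" by simp

theorem mainTheorem19:
  fixes M :: "real^'n^'n"
    and f :: "real^'n \<Rightarrow> real"
    and g :: "real^'n \<Rightarrow> real^'n"
    and xs :: "real^'n"
    and \<sigma> :: real
    and A a lam :: "nat \<Rightarrow> real"
    and x v y :: "nat \<Rightarrow> real^'n"
  assumes M_psd: "psd M"
    and f_sconv: "strictly_convex f"
    and f_grad: "\<And>z. (f has_derivative (\<lambda>h. g z \<bullet> h)) (at z)"
    and grad_im: "\<And>z. g z \<in> range (\<lambda>u. M *v u)"
    and xs_min: "\<And>z. f xs \<le> f z"
    and sigma: "0 \<le> \<sigma>" "\<sigma> < 1"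
    and A0: "0 \<le> A 0"
    and x0: "x 0 = v 0"
    and lam_pos: "\<And>k. 0 < lam (Suc k)"
    and a_def: "\<And>k. a (Suc k) =
        (lam (Suc k) + sqrt ((lam (Suc k))\<^sup>2 + 4 * lam (Suc k) * A k)) / 2"
    and y_def: "\<And>k. y k = (A k / (A k + a (Suc k))) *\<^sub>R x k
                         + (a (Suc k) / (A k + a (Suc k))) *\<^sub>R v k"
    and inexact: "\<And>k. mnorm M (x (Suc k) - (y k - lam (Suc k) *\<^sub>R (mp_pinv M *v g (x (Suc k)))))
                       \<le> \<sigma> * mnorm M (x (Suc k) - y k)"
    and v_step: "\<And>k. v (Suc k) = v k - a (Suc k) *\<^sub>R (mp_pinv M *v g (x (Suc k)))"
    and A_step: "\<And>k. A (Suc k) = A k + a (Suc k)"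
  shows "\<forall>k. mnorm M (x k - xs) \<le> (2 - \<sigma>) / (1 - \<sigma>) *
              sqrt (2 * (A 0 * (f (x 0) - f xs) + 1/2 * (mnorm M (v 0 - xs))\<^sup>2))
          \<and> mnorm M (v k - xs) \<le>
              sqrt (2 * (A 0 * (f (x 0) - f xs) + 1/2 * (mnorm M (v 0 - xs))\<^sup>2))"
proof -
  have symM: "transpose M = M" using M_psd by (simp add: psd_def)
  define P where "P = mp_pinv M"
  define u where "u k = P *v g (x (Suc k))" for k
  define G where "G k = g (x (Suc k))" for k
  have Mu: "M *v u k = G k" for k
  proof -
    obtain w where w: "g (x (Suc k)) = M *v w" using grad_im[of "x (Suc k)"] by auto
    have "M *v u k = (M ** P ** M) *v w" unfolding u_def w by (simp add: matrix_vector_mul_assoc matrix_mul_assoc)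
    also have "\<dots> = M *v w" using mp_pinv_MPM[OF symM] P_def by simp
    finally show ?thesis using w G_def by simp
  qed
  have ipu: "ipM M (u k) z = G k \<bullet> z" for k z
    using ipM_sym[OF M_psd, of "u k" z] Mu[of k] by (simp add: ipM_def inner_commute)
  have Anon: "0 \<le> A k" for k
  proof (induction k)
    case (Suc k)
    have "0 \<le> sqrt ((lam (Suc k))\<^sup>2 + 4 * lam (Suc k) * A k)" using Suc lam_pos[of k] by (intro real_sqrt_ge_zero) simp
    then have "0 \<le> a (Suc k)" unfolding a_def[of k] using lam_pos[of k] by (intro half_pos[THEN less_imp_le])
    then show ?case using Suc A_step[of k] by simp
  qed (use A0 in simp)
  have apos: "0 < a (Suc k)" for k
  proof -
    have "0 \<le> sqrt ((lam (Suc k))\<^sup>2 + 4 * lam (Suc k) * A k)" using Anon[of k] lam_pos[of k] by (intro real_sqrt_ge_zero) simp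
    then show ?thesis unfolding a_def[of k] using lam_pos[of k] by (intro half_pos)
  qed
  have Apos: "0 < A (Suc k)" for k using Anon[of k] apos[of k] A_step[of k] by simp
  have asq: "(a (Suc k))\<^sup>2 = lam (Suc k) * A (Suc k)" for k
  proof -
    define s where "s = sqrt ((lam (Suc k))\<^sup>2 + 4 * lam (Suc k) * A k)"
    have s2: "s\<^sup>2 = (lam (Suc k))\<^sup>2 + 4 * lam (Suc k) * A k"
      unfolding s_def using Anon[of k] lam_pos[of k] by simp
    have "a (Suc k) = (lam (Suc k) + s) / 2" using a_def s_def by simp
    then have se: "s = 2 * a (Suc k) - lam (Suc k)" by simp
    show ?thesis unfolding A_step[of k] using s2 unfolding se by algebra
  qed
  have lam_eq: "lam (Suc k) = (a (Suc k))\<^sup>2 / A (Suc k)" for k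
    using asq[of k] Apos[of k] by (simp add: field_simps)
  have fmin: "0 \<le> f z - f xs" for z using xs_min[of z] by simp
  have grad: "G k \<bullet> (z - x (Suc k)) \<le> f z - f (x (Suc k))" for k z
    unfolding G_def by (rule grad_ineq[OF f_sconv f_grad])
  define p where "p k = A k * (f (x k) - f xs) + 1/2 * (mnorm M (v k - xs))\<^sup>2" for k
  define w where "w k = y k - x (Suc k)" for k
  have Ay: "A (Suc k) *\<^sub>R y k = A k *\<^sub>R x k + a (Suc k) *\<^sub>R v k" for k
  proof -
    have ne: "A k + a (Suc k) \<noteq> 0" using Apos[of k] A_step[of k] by simp
    show ?thesis unfolding y_def A_step using ne by (simp add: scaleR_add_right)
  qed
  have keystep: "p (Suc k) + (1 - \<sigma>\<^sup>2) / 2 * (A (Suc k) / lam (Suc k)) * ipM M (w k) (w k) \<le> p k" for k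
  proof -
    define a' where "a' = a (Suc k)"
    define A' where "A' = A (Suc k)"
    define l where "l = lam (Suc k)"
    define Vv where "Vv = ipM M (v k - xs) (v k - xs)"
    define Vv' where "Vv' = ipM M (v (Suc k) - xs) (v (Suc k) - xs)"
    define uu where "uu = ipM M (u k) (u k)"
    define uv where "uv = ipM M (u k) (v k - xs)"
    define ww where "ww = ipM M (w k) (w k)"
    define uw where "uw = ipM M (u k) (w k)"
    define F where "F = f (x k) - f xs"
    define F' where "F' = f (x (Suc k)) - f xs"
    have lpos: "0 < l" using lam_pos l_def by simp
    have A'pos: "0 < A'" using Apos A'_def by simp
    have E1: "Vv' = Vv - 2 * a' * uv + a'\<^sup>2 * uu"
    proof -
      have "v (Suc k) - xs = (v k - xs) - a' *\<^sub>R u k" using v_step[of k] a'_def u_def P_def by simp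
      then show ?thesis unfolding Vv'_def Vv_def uv_def uu_def
        by (simp only: ipM_expand[OF M_psd])
    qed
    have E2: "a' * uv \<ge> A' * F' - A k * F + A' * uw"
    proof -
      have vec: "a' *\<^sub>R (v k - xs) = a' *\<^sub>R (x (Suc k) - xs) + A k *\<^sub>R (x (Suc k) - x k) + A' *\<^sub>R w k"
        using Ay[of k] A_step[of k] unfolding w_def a'_def A'_def
        by (simp add: algebra_simps)
      have "a' * uv = G k \<bullet> (a' *\<^sub>R (v k - xs))" unfolding uv_def ipu by simp
      also have "\<dots> = a' * (G k \<bullet> (x (Suc k) - xs)) + A k * (G k \<bullet> (x (Suc k) - x k)) + A' * uw"
        unfolding vec uw_def ipu by (simp add: inner_add_right)
      finally have eq: "a' * uv = a' * (G k \<bullet> (x (Suc k) - xs)) + A k * (G k \<bullet> (x (Suc k) - x k)) + A' * uw" .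
      have g1: "G k \<bullet> (x (Suc k) - xs) \<ge> F'"
        using grad[of k xs] unfolding F'_def by (simp add: inner_diff_right)
      have g2: "G k \<bullet> (x (Suc k) - x k) \<ge> f (x (Suc k)) - f (x k)"
        using grad[of k "x k"] by (simp add: inner_diff_right)
      have "a' * (G k \<bullet> (x (Suc k) - xs)) \<ge> a' * F'"
        using g1 apos[of k] a'_def by (intro mult_left_mono) auto
      moreover have "A k * (G k \<bullet> (x (Suc k) - x k)) \<ge> A k * (f (x (Suc k)) - f (x k))"
        using g2 Anon[of k] by (intro mult_left_mono) auto
      moreover have "A' * F' = a' * F' + A k * (f (x (Suc k)) - f (x k)) + A k * F"
        unfolding A'_def A_step a'_def F'_def F_def by (simp add: algebra_simps)
      ultimately show ?thesis using eq by linarith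
    qed
    have E3: "l\<^sup>2 * uu - 2 * l * uw + ww \<le> \<sigma>\<^sup>2 * ww"
    proof -
      have r: "x (Suc k) - (y k - lam (Suc k) *\<^sub>R (mp_pinv M *v g (x (Suc k)))) = l *\<^sub>R u k - w k"
        unfolding w_def u_def P_def l_def by (simp add: algebra_simps)
      have xw: "x (Suc k) - y k = - w k" unfolding w_def by simp
      have "mnorm M (l *\<^sub>R u k - w k) \<le> \<sigma> * mnorm M (w k)"
        using inexact[of k] unfolding r xw mnorm_neg .
      then have "(mnorm M (l *\<^sub>R u k - w k))\<^sup>2 \<le> (\<sigma> * mnorm M (w k))\<^sup>2"
        using mnorm_nonneg[OF M_psd] by (intro power_mono) auto
      then have "ipM M (l *\<^sub>R u k - w k) (l *\<^sub>R u k - w k) \<le> \<sigma>\<^sup>2 * ww"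
        unfolding ww_def by (simp add: mnorm_sq[OF M_psd] power_mult_distrib)
      moreover have "ipM M (l *\<^sub>R u k - w k) (l *\<^sub>R u k - w k) = l\<^sup>2 * uu - 2 * l * uw + ww"
      proof -
        have "l *\<^sub>R u k - w k = - (w k - l *\<^sub>R u k)" by simp
        then have "ipM M (l *\<^sub>R u k - w k) (l *\<^sub>R u k - w k) = ipM M (w k - l *\<^sub>R u k) (w k - l *\<^sub>R u k)"
          by (simp only: ipM_neg)
        also have "\<dots> = l\<^sup>2 * uu - 2 * l * uw + ww"
          unfolding uu_def uw_def ww_def by (simp add: ipM_expand[OF M_psd])
        finally show ?thesis .
      qed
      ultimately show ?thesis by simp
    qed
    have E3': "l * A' / 2 * uu - A' * uw + A' / (2 * l) * ww \<le> A' / (2 * l) * (\<sigma>\<^sup>2 * ww)"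
    proof -
      have "A' / (2 * l) * (l\<^sup>2 * uu - 2 * l * uw + ww) \<le> A' / (2 * l) * (\<sigma>\<^sup>2 * ww)"
        using E3 A'pos lpos by (intro mult_left_mono) auto
      moreover have "A' / (2 * l) * (l\<^sup>2 * uu - 2 * l * uw + ww) = l * A' / 2 * uu - A' * uw + A' / (2 * l) * ww"
        using lpos by (simp add: field_simps power2_eq_square)
      ultimately show ?thesis by simp
    qed
    have a2: "a'\<^sup>2 * uu = l * A' * uu" using asq[of k] a'_def l_def A'_def by simp
    have pk: "p k = A k * F + 1/2 * Vv"
      unfolding p_def F_def Vv_def by (simp add: mnorm_sq[OF M_psd])
    have pk': "p (Suc k) = A' * F' + 1/2 * Vv'"
      unfolding p_def F'_def Vv'_def A'_def by (simp add: mnorm_sq[OF M_psd])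
    have last: "(1 - \<sigma>\<^sup>2) / 2 * (A' / l) * ww = A' / (2 * l) * ww - A' / (2 * l) * (\<sigma>\<^sup>2 * ww)"
      using lpos by (simp add: field_simps)
    show ?thesis
      unfolding pk pk' A'_def[symmetric] l_def[symmetric] ww_def[symmetric] last
    proof -
      have a3: "l * A' / 2 * uu = 1/2 * (a'\<^sup>2 * uu)" unfolding a2 by simp
      show "A' * F' + 1 / 2 * Vv' + (A' / (2 * l) * ww - A' / (2 * l) * (\<sigma>\<^sup>2 * ww)) \<le> A k * F + 1 / 2 * Vv"
        using E1 E2 E3' a3 by linarith
    qed
  qed
  have wnon: "0 \<le> (1 - \<sigma>\<^sup>2) / 2 * (A (Suc k) / lam (Suc k)) * ipM M (w k) (w k)" for k
  proof -
    have "\<sigma>\<^sup>2 \<le> 1" using sigma by (simp add: power_le_one)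
    then show ?thesis using Apos[of k] lam_pos[of k] ipM_nonneg[OF M_psd, of "w k"] by simp
  qed
  have pdec: "p k \<le> p 0" for k
  proof (induction k)
    case (Suc k) then show ?case using keystep[of k] wnon[of k] by linarith
  qed simp
  have p0nn: "0 \<le> p 0" unfolding p_def using A0 fmin[of "x 0"] by simp
  define V where "V = sqrt (2 * p 0)"
  have Vnn: "0 \<le> V" unfolding V_def using p0nn by simp
  have V2: "V\<^sup>2 = 2 * p 0" unfolding V_def using p0nn by simp
  have vb: "mnorm M (v k - xs) \<le> V" for k
  proof -
    have "A k * (f (x k) - f xs) \<ge> 0" using Anon[of k] fmin[of "x k"] by simp
    moreover have "p k = A k * (f (x k) - f xs) + 1/2 * (mnorm M (v k - xs))\<^sup>2" by (simp add: p_def)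
    ultimately have "(mnorm M (v k - xs))\<^sup>2 \<le> V\<^sup>2" using pdec[of k] V2 by linarith
    then show ?thesis using Vnn mnorm_nonneg[OF M_psd] power2_le_imp_le by blast
  qed
  define B where "B = (2 - \<sigma>) / (1 - \<sigma>) * V"
  have sig1: "0 < 1 - \<sigma>" using sigma by simp
  have B_eq: "B = V + V / (1 - \<sigma>)" unfolding B_def using sig1 by (simp add: field_simps)
  have VB: "V \<le> B" unfolding B_eq using Vnn sig1 by simp
  have xb: "mnorm M (x k - xs) \<le> B" for k
  proof (induction k)
    case 0 then show ?case using vb[of 0] x0 VB by simp
  next
    case (Suc k)
    define a' where "a' = a (Suc k)"
    define A' where "A' = A (Suc k)"
    define l where "l = lam (Suc k)"
    define r where "r = x (Suc k) - (y k - l *\<^sub>R u k)"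
    have A'pos: "0 < A'" using Apos A'_def by simp
    have a'pos: "0 < a'" using apos a'_def by simp
    have sumA: "A k / A' + a' / A' = 1"
    proof -
      have "A k / A' + a' / A' = (A k + a') / A'" by (simp add: add_divide_distrib)
      also have "\<dots> = 1" using A_step[of k] A'pos unfolding A'_def a'_def by simp
      finally show ?thesis .
    qed
    have yv: "y k = (A k / A') *\<^sub>R x k + (a' / A') *\<^sub>R v k" using y_def[of k] A_step[of k] unfolding A'_def a'_def by simp
    have vv: "v (Suc k) = v k - a' *\<^sub>R u k" using v_step[of k] unfolding a'_def u_def P_def by simp
    have la: "l = a' * a' / A'" using lam_eq[of k] unfolding l_def a'_def A'_def by (simp add: power2_eq_square)
    have dec: "x (Suc k) - xs = (A k / A') *\<^sub>R (x k - xs) + (a' / A') *\<^sub>R (v (Suc k) - xs) + r"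
    proof -
      have "(A k / A') *\<^sub>R (x k - xs) + (a' / A') *\<^sub>R (v (Suc k) - xs)
          = (A k / A') *\<^sub>R x k + (a' / A') *\<^sub>R v k - (a' * a' / A') *\<^sub>R u k - (A k / A' + a' / A') *\<^sub>R xs"
        unfolding vv by (simp add: algebra_simps)
      also have "\<dots> = y k - l *\<^sub>R u k - xs" unfolding sumA yv la by simp
      finally show ?thesis unfolding r_def by simp
    qed
    have rr: "r = x (Suc k) - (y k - lam (Suc k) *\<^sub>R (mp_pinv M *v g (x (Suc k))))"
      unfolding r_def l_def u_def P_def by simp
    have xw: "x (Suc k) - y k = - w k" unfolding w_def by simp
    have rb: "mnorm M r \<le> \<sigma> * mnorm M (w k)"
      using inexact[of k] unfolding rr[symmetric] xw mnorm_neg .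
    have wb: "\<sigma> * mnorm M (w k) \<le> (a' / A') * V / (1 - \<sigma>)"
    proof -
      define ww where "ww = ipM M (w k) (w k)"
      define K where "K = (a' / A')\<^sup>2 * V\<^sup>2"
      have "(1 - \<sigma>\<^sup>2) / 2 * (A' / l) * ww \<le> p 0"
      proof -
        have "0 \<le> p (Suc k)" unfolding p_def using Anon[of "Suc k"] fmin[of "x (Suc k)"] by simp
        then show ?thesis using keystep[of k] pdec[of k] unfolding ww_def A'_def l_def by linarith
      qed
      then have "(1 - \<sigma>\<^sup>2) * ww * (A' / l) \<le> V\<^sup>2" using V2 by (simp add: algebra_simps)
      moreover have "A' / l = (A' / a')\<^sup>2" unfolding la using a'pos A'pos by (simp add: field_simps power2_eq_square)
      ultimately have "(1 - \<sigma>\<^sup>2) * ww * (A' / a')\<^sup>2 \<le> V\<^sup>2" by simp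
      then have "(1 - \<sigma>\<^sup>2) * ww \<le> K" unfolding K_def using a'pos A'pos
        by (simp add: field_simps power2_eq_square)
      then have "\<sigma>\<^sup>2 * ww \<le> K / (1 - \<sigma>)\<^sup>2" using sig_aux[of \<sigma> K ww] sigma unfolding K_def by simp
      also have "\<dots> = ((a' / A') * V / (1 - \<sigma>))\<^sup>2" unfolding K_def by (simp add: power_mult_distrib power_divide)
      finally have "(\<sigma> * mnorm M (w k))\<^sup>2 \<le> ((a' / A') * V / (1 - \<sigma>))\<^sup>2"
        unfolding ww_def by (simp add: power_mult_distrib mnorm_sq[OF M_psd])
      moreover have "0 \<le> (a' / A') * V / (1 - \<sigma>)" using a'pos A'pos Vnn sig1 by simp
      ultimately show ?thesis using power2_le_imp_le by blast
    qed
    have "mnorm M (x (Suc k) - xs) \<le> mnorm M ((A k / A') *\<^sub>R (x k - xs)) + mnorm M ((a' / A') *\<^sub>R (v (Suc k) - xs)) + mnorm M r"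
      unfolding dec using mnorm_tri[OF M_psd, of "(A k / A') *\<^sub>R (x k - xs) + (a' / A') *\<^sub>R (v (Suc k) - xs)" r]
        mnorm_tri[OF M_psd, of "(A k / A') *\<^sub>R (x k - xs)" "(a' / A') *\<^sub>R (v (Suc k) - xs)"] by linarith
    also have "\<dots> = (A k / A') * mnorm M (x k - xs) + (a' / A') * mnorm M (v (Suc k) - xs) + mnorm M r"
      using Anon[of k] A'pos a'pos by (simp add: mnorm_scale)
    also have "\<dots> \<le> (A k / A') * B + (a' / A') * V + (a' / A') * V / (1 - \<sigma>)"
    proof -
      have "(A k / A') * mnorm M (x k - xs) \<le> (A k / A') * B"
        using Suc Anon[of k] A'pos by (intro mult_left_mono) auto
      moreover have "(a' / A') * mnorm M (v (Suc k) - xs) \<le> (a' / A') * V"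
        using vb a'pos A'pos by (intro mult_left_mono) auto
      ultimately show ?thesis using rb wb by linarith
    qed
    also have "\<dots> = (A k / A' + a' / A') * B" unfolding B_eq by (simp add: algebra_simps)
    also have "\<dots> = B" using sumA by simp
    finally show ?case .
  qed
  have "sqrt (2 * (A 0 * (f (x 0) - f xs) + 1/2 * (mnorm M (v 0 - xs))\<^sup>2)) = V"
    unfolding V_def p_def by simp
  then show ?thesis using xb vb unfolding B_def by simp
qed


end
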